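(* Let $X$ be a Polish space with no isolated point and $T:X\to X$ continuous. Assume there exists a finite set $F_0\subset X$ such that, for every $N\in\mathbb N$, the set $\{x\in X: x\notin F_0,\ T^Nx=x\}$ has no isolated point. If $T$ admits an invariant Borel probability measure with full support, then it also admits one which is continuous.
   Context: A measure $m$ is continuous if $m(\{a\})=0$ for every $a\in X$; full support means $m(U)>0$ for all nonempty open $U$. *)

theory Defs
  imports "HOL-Probability.Probability"
begin

definition borel_prob :: "'a::topological_space measure \<Rightarrow> bool" where
  "borel_prob M \<longleftrightarrow> sets M = sets borel \<and> prob_space M"

definition invariant_measure :: "('a::topological_space \<Rightarrow> 'a) \<Rightarrow> 'a measure \<Rightarrow> bool" where
  "invariant_measure T M \<longleftrightarrow> (\<forall>A \<in> sets borel. emeasure M (T -` A) = emeasure M A)"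

definition full_support :: "'a::topological_space measure \<Rightarrow> bool" where
  "full_support M \<longleftrightarrow> (\<forall>U. open U \<and> U \<noteq> {} \<longrightarrow> emeasure M U > 0)"

definition continuous_measure :: "'a::topological_space measure \<Rightarrow> bool" where
  "continuous_measure M \<longleftrightarrow> (\<forall>a. emeasure M {a} = 0)"

definition no_isolated_point :: "'a::topological_space set \<Rightarrow> bool" where
  "no_isolated_point S \<longleftrightarrow> (\<forall>x. \<not> x isolated_in S)"

end

theory Submission
  imports Defs
begin

lemma code_div2: "nat \<lfloor>2^(Suc n) * t\<rfloor> div 2 = nat \<lfloor>2^n * (t::real)\<rfloor>"
proof -
  have "\<lfloor>2 * (2^n * t)\<rfloor> div 2 = \<lfloor>2^n*t\<rfloor>"
    by linarith
  then show ?thesis by (simp add: nat_div_distrib mult.assoc)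
qed

lemma codes_eq_imp_eq:
  fixes t t' :: real
  assumes "t \<in> {0..<1}" "t' \<in> {0..<1}" "\<forall>n. nat \<lfloor>2^n * t\<rfloor> = nat \<lfloor>2^n * t'\<rfloor>"
  shows "t = t'"
proof (rule ccontr)
  assume ne: "t \<noteq> t'"
  have "\<forall>n. \<bar>t - t'\<bar> < (1/2)^n"
  proof
    fix n
    have "\<lfloor>2^n * t\<rfloor> = \<lfloor>2^n * t'\<rfloor>" using assms(3)[rule_format, of n] assms(1,2)
      by (simp add: eq_nat_nat_iff)
    then have "\<bar>2^n * t - 2^n*t'\<bar> < 1"
      by (smt (verit, best) floor_eq_iff)
    then have "(2::real)^n * \<bar>t - t'\<bar> < 1" by (simp add: abs_mult right_diff_distrib[symmetric])
    then show "\<bar>t - t'\<bar> < (1/2)^n" by (simp add: field_simps power_divide)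
  qed
  moreover obtain n where "(1/2::real)^n < \<bar>t - t'\<bar>"
    using ne real_arch_pow_inv[of "\<bar>t-t'\<bar>" "1/2"] by auto
  ultimately show False by (metis less_asym)
qed

lemma cantor_map:
  fixes P :: "'a::polish_space set"
  assumes x0: "x0 \<in> P" and noiso: "\<forall>x. \<not> x isolated_in P"
  shows "\<exists>g::real \<Rightarrow> 'a. g \<in> borel_measurable borel \<and> (\<forall>t. g t \<in> closure P) \<and> inj_on g {0..<1}"
proof -
  have "\<forall>p\<in>P. \<forall>r>0. \<exists>q. q \<in> P \<and> q \<noteq> p \<and> dist p q < r"
  proof (intro ballI allI impI)
    fix p r assume p: "p \<in> P" and r: "(r::real) > 0"
    have "\<not> (ball p r \<inter> P = {p})" using noiso p unfolding isolated_in_def by auto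
    moreover have "p \<in> ball p r \<inter> P" using p r by auto
    ultimately obtain q where "q \<in> ball p r \<inter> P" "q \<noteq> p" by blast
    then show "\<exists>q. q \<in> P \<and> q \<noteq> p \<and> dist p q < r" by auto
  qed
  then obtain q where q: "\<And>p r. p \<in> P \<Longrightarrow> r > 0 \<Longrightarrow> q p r \<in> P \<and> q p r \<noteq> p \<and> dist p (q p r) < r"
    by metis
  define child where "child = (\<lambda>(pr::'a \<times> real) (b::bool).
     (if b then q (fst pr) (snd pr / 2) else fst pr, min (dist (fst pr) (q (fst pr) (snd pr / 2)) / 3) (snd pr / 4)))"
  define h where "h = (\<lambda>n::nat. rec_nat (\<lambda>k::nat. (x0, 1::real)) (\<lambda>n hn k. child (hn (k div 2)) (odd k)) n)"
  have h0: "h 0 k = (x0, 1)" for k by (simp add: h_def)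
  have hS: "h (Suc n) k = child (h n (k div 2)) (odd k)" for n k by (simp add: h_def)
  have child_prop: "fst (child (p, r) b) \<in> P \<and> 0 < snd (child (p,r) b) \<and> snd (child (p,r) b) \<le> r/2
        \<and> cball (fst (child (p,r) b)) (snd (child (p,r) b)) \<subseteq> cball p r"
    if "p \<in> P" "r > 0" for p r b
  proof -
    have qq: "q p (r/2) \<in> P" "q p (r/2) \<noteq> p" "dist p (q p (r/2)) < r/2" using q[of p "r/2"] that by auto
    let ?d = "min (dist p (q p (r/2)) / 3) (r / 4)"
    have d: "0 < ?d" "?d \<le> r/4" using qq that by auto
    have "cball (if b then q p (r/2) else p) ?d \<subseteq> cball p r"
    proof
      fix y assume "y \<in> cball (if b then q p (r / 2) else p) ?d"
      then have "dist (if b then q p (r / 2) else p) y \<le> r/4" using d by auto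
      then show "y \<in> cball p r" using qq(3) d that
        using dist_triangle[of p y "q p (r/2)"] by (cases b) (auto simp: dist_commute)
    qed
    then show ?thesis using qq d that by (auto simp: child_def)
  qed
  have child_disj: "cball (fst (child (p, r) True)) (snd (child (p,r) True)) \<inter>
       cball (fst (child (p, r) False)) (snd (child (p,r) False)) = {}"
    if "p \<in> P" "r > 0" for p r
  proof -
    have qq: "q p (r/2) \<noteq> p" using q[of p "r/2"] that by auto
    let ?d = "min (dist p (q p (r/2)) / 3) (r / 4)"
    have "?d \<le> dist p (q p (r/2)) / 3" by simp
    moreover have "dist p (q p (r/2)) > 0" using qq by simp
    ultimately show ?thesis unfolding child_def
      apply (auto simp: dist_commute)
      subgoal for x using dist_triangle[of p "q p (r/2)" x] zero_less_dist_iff[of p "q p (r/2)"] dist_commute[of x p] by (smt (verit))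
      done
  qed
  have inv: "fst (h n k) \<in> P \<and> 0 < snd (h n k) \<and> snd (h n k) \<le> (1/2)^n" for n k
  proof (induction n arbitrary: k)
    case 0 then show ?case using x0 by (simp add: h0)
  next
    case (Suc n)
    from Suc[of "k div 2"] have "fst (h n (k div 2)) \<in> P" "0 < snd (h n (k div 2))" "snd (h n (k div 2)) \<le> (1/2)^n" by auto
    with child_prop[of "fst (h n (k div 2))" "snd (h n (k div 2))" "odd k"] show ?case
      by (auto simp: hS)
  qed
  have nest: "cball (fst (h (Suc n) k)) (snd (h (Suc n) k)) \<subseteq> cball (fst (h n (k div 2))) (snd (h n (k div 2)))" for n k
    using child_prop[of "fst (h n (k div 2))" "snd (h n (k div 2))" "odd k"] inv[of n "k div 2"] by (simp add: hS)
  define c where "c = (\<lambda>n (t::real). nat \<lfloor>2^n * t\<rfloor>)"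
  have cS: "c (Suc n) t div 2 = c n t" for n t unfolding c_def by (rule code_div2)
  define z where "z = (\<lambda>t n. fst (h n (c n t)))"
  define \<rho> where "\<rho> = (\<lambda>t n. snd (h n (c n t)))"
  have chain: "cball (z t m) (\<rho> t m) \<subseteq> cball (z t n) (\<rho> t n)" if "n \<le> m" for t n m
    using that
  proof (induction m rule: dec_induct)
    case base then show ?case by simp
  next
    case (step m) then show ?case using nest[of m "c (Suc m) t"] by (auto simp: z_def \<rho>_def cS)
  qed
  have zball: "z t m \<in> cball (z t n) (\<rho> t n)" if "n \<le> m" for t n m
  proof -
    have "z t m \<in> cball (z t m) (\<rho> t m)" using inv[of m "c m t"] by (simp add: \<rho>_def)
    then show ?thesis using chain[OF that] by blast
  qed
  have zin: "z t m \<in> cball (z t n) ((1/2)^n)" if "n \<le> m" for t n m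
  proof -
    have "z t m \<in> cball (z t m) (\<rho> t m)" using inv[of m "c m t"] by (simp add: \<rho>_def)
    then have "z t m \<in> cball (z t n) (\<rho> t n)" using chain[OF that] by blast
    then show ?thesis using inv[of n "c n t"] by (auto simp: \<rho>_def)
  qed
  have cauchy: "Cauchy (z t)" for t
  proof (rule metric_CauchyI)
    fix e :: real assume "e > 0"
    then obtain M where M: "(1/2::real)^M < e/2" using real_arch_pow_inv[of "e/2" "1/2"] by auto
    show "\<exists>M. \<forall>m\<ge>M. \<forall>n\<ge>M. dist (z t m) (z t n) < e"
    proof (intro exI allI impI)
      fix m n assume "M \<le> m" "M \<le> n"
      then have "dist (z t M) (z t m) \<le> (1/2)^M" "dist (z t M) (z t n) \<le> (1/2)^M"
        using zin by auto
      then show "dist (z t m) (z t n) < e" using M dist_triangle[of "z t m" "z t n" "z t M"] dist_commute[of "z t m" "z t M"]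
        by linarith
    qed
  qed
  define g where "g = (\<lambda>t. lim (z t))"
  have glim: "z t \<longlonglongrightarrow> g t" for t
    unfolding g_def using cauchy[of t] by (simp add: Cauchy_convergent_iff convergent_LIMSEQ_iff)
  have gball: "g t \<in> cball (z t n) (\<rho> t n)" for t n
  proof (rule Lim_in_closed_set[OF closed_cball _ _ glim])
    show "\<forall>\<^sub>F m in sequentially. z t m \<in> cball (z t n) (\<rho> t n)"
      unfolding eventually_sequentially
      using zball by blast
  qed simp
  have gcl: "g t \<in> closure P" for t
  proof (rule Lim_in_closed_set[OF closed_closure _ _ glim])
    show "\<forall>\<^sub>F m in sequentially. z t m \<in> closure P"
      using inv closure_subset by (auto simp: z_def intro!: always_eventually)
  qed simp
  have meas: "g \<in> borel_measurable borel"
  proof (rule borel_measurable_LIMSEQ_metric[OF _ glim])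
    fix n
    have "c n \<in> measurable borel (count_space UNIV)" unfolding c_def by measurable
    moreover have "(\<lambda>k. fst (h n k)) \<in> measurable (count_space UNIV) borel" by simp
    ultimately have "(\<lambda>k. fst (h n k)) \<circ> c n \<in> borel_measurable borel"
      by (rule measurable_comp)
    then show "(\<lambda>t. z t n) \<in> borel_measurable borel" by (simp add: z_def o_def)
  qed
  have inj: "inj_on g {0..<1}"
  proof (rule inj_onI, rule ccontr)
    fix t t' assume t: "t \<in> {0..<1::real}" and t': "t' \<in> {0..<1::real}" and eq: "g t = g t'" and ne: "t \<noteq> t'"
    have "\<exists>n. c n t \<noteq> c n t'" using codes_eq_imp_eq[OF t t'] ne by (auto simp: c_def)
    then obtain n where n: "c n t \<noteq> c n t'" and least: "\<And>m. m < n \<Longrightarrow> c m t = c m t'"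
      using exists_least_iff[of "\<lambda>n. c n t \<noteq> c n t'"] by blast
    have "c 0 t = 0" "c 0 t' = 0" using t t' by (auto simp: c_def)
    then obtain m where m: "n = Suc m" using n by (cases n) auto
    have same: "c n t div 2 = c n t' div 2" using least[of m] cS m by simp
    have par: "odd (c n t) \<noteq> odd (c n t')"
    proof
      assume "odd (c n t) = odd (c n t')"
      then have "c n t mod 2 = c n t' mod 2" by (metis odd_iff_mod_2_eq_one not_mod_2_eq_1_eq_0)
      with same have "c n t = c n t'" by (metis div_mult_mod_eq)
      with n show False by simp
    qed
    let ?p = "h m (c m t)"
    have pp: "fst ?p \<in> P" "snd ?p > 0" using inv by auto
    have e1: "h n (c n t) = child ?p (odd (c n t))" using m cS hS by simp
    have e2: "h n (c n t') = child ?p (odd (c n t'))" using m cS hS least[of m] by simp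
    have "g t \<in> cball (fst (h n (c n t))) (snd (h n (c n t)))" using gball[of t n] by (simp add: z_def \<rho>_def)
    moreover have "g t' \<in> cball (fst (h n (c n t'))) (snd (h n (c n t')))" using gball[of t' n] by (simp add: z_def \<rho>_def)
    ultimately show False using child_disj[of "fst ?p" "snd ?p"] pp e1 e2 eq par
      by (cases "odd (c n t)") auto
  qed
  show ?thesis using meas gcl inj by blast
qed


lemma continuous_funpow: "continuous_on UNIV (T::'a::topological_space \<Rightarrow> 'a) \<Longrightarrow> continuous_on UNIV (T ^^ k)"
proof (induction k)
  case 0 then show ?case by (simp add: id_def)
next
  case (Suc k) then show ?case by (simp add: continuous_on_compose2)
qed

lemma case_a:
  fixes T :: "'a::polish_space \<Rightarrow> 'a" and g :: "real \<Rightarrow> 'a"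
  assumes contT: "continuous_on UNIV T" and N: "N \<ge> 1"
    and gm: "g \<in> borel_measurable borel" and per: "\<And>t. (T^^N) (g t) = g t"
    and inj: "inj_on g {0..<1}"
  shows "\<exists>M. borel_prob M \<and> invariant_measure T M \<and> continuous_measure M"
proof -
  define \<mu> where "\<mu> = uniform_measure lborel {0..<1::real}"
  have Tk: "(T^^k) \<in> borel_measurable borel" for k
    by (rule borel_measurable_continuous_onI[OF continuous_funpow[OF contT]])
  have Tm: "T \<in> borel_measurable borel" by (rule borel_measurable_continuous_onI[OF contT])
  have hm: "(\<lambda>t. (T^^k) (g t)) \<in> borel_measurable borel" for k
    using measurable_comp[OF gm Tk[of k]] by (simp add: o_def)
  have smu: "sets \<mu> = sets borel" "space \<mu> = UNIV" by (auto simp: \<mu>_def)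
  have pmu: "prob_space \<mu>" unfolding \<mu>_def by (rule prob_space_uniform_measure) auto
  have hmu: "(\<lambda>t. (T^^k) (g t)) \<in> measurable \<mu> borel" for k
    using hm[of k] by (simp add: measurable_cong_sets[OF smu(1) refl])
  define D where "D = (\<lambda>k. distr \<mu> borel (\<lambda>t. (T^^k) (g t)))"
  have Dsp: "D k \<in> space (subprob_algebra borel)" for k
    unfolding D_def space_subprob_algebra
    using prob_space.prob_space_distr[OF pmu hmu[of k]] prob_space_imp_subprob_space by auto
  define \<nu> where "\<nu> = scale_measure (1 / of_nat N) (count_space {..<N} \<bind> D)"
  have "0 \<in> {..<N}" using N by simp
  then have ne: "space (count_space {..<N}) \<noteq> {}" by auto
  have Dm: "D \<in> measurable (count_space {..<N}) (subprob_algebra borel)"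
    using Dsp by auto
  have nu_eq: "emeasure \<nu> A = (1 / of_nat N) * (\<Sum>k<N. emeasure \<mu> {t. (T^^k) (g t) \<in> A})"
    if A: "A \<in> sets borel" for A
  proof -
    have "emeasure (count_space {..<N} \<bind> D) A = (\<Sum>k<N. emeasure (D k) A)"
      by (simp add: emeasure_bind[OF ne Dm A] nn_integral_count_space_finite)
    also have "\<dots> = (\<Sum>k<N. emeasure \<mu> {t. (T^^k) (g t) \<in> A})"
      by (intro sum.cong refl) (simp add: D_def emeasure_distr[OF hmu A] smu vimage_def)
    finally show ?thesis by (simp add: \<nu>_def)
  qed
  have snu: "sets \<nu> = sets borel"
    unfolding \<nu>_def using sets_bind[of "count_space {..<N}" D borel] ne Dsp
    by (auto simp: space_subprob_algebra)
  have fin: "emeasure \<mu> S \<noteq> \<infinity>" for S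
    using prob_space.emeasure_le_1[OF pmu, of S] by (auto simp: top_unique)
  have "emeasure \<nu> (space \<nu>) = 1"
  proof -
    have sp: "space \<nu> = UNIV" using sets_eq_imp_space_eq[OF snu] by simp
    have "emeasure \<nu> UNIV = (1 / of_nat N) * (\<Sum>k<N. emeasure \<mu> UNIV)"
      using nu_eq[of UNIV] by simp
    also have "emeasure \<mu> UNIV = 1" using prob_space.emeasure_space_1[OF pmu] smu by simp
    finally show ?thesis using sp N
      by (simp add: ennreal_of_nat_eq_real_of_nat ennreal_divide_times)
  qed
  then have pnu: "prob_space \<nu>" by (rule prob_spaceI)
  have inv: "invariant_measure T \<nu>"
    unfolding invariant_measure_def
  proof
    fix A :: "'a set" assume A: "A \<in> sets borel"
    have TA: "T -` A \<in> sets borel" using measurable_sets[OF Tm A] by simp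
    define F where "F = (\<lambda>k. emeasure \<mu> {t. (T^^k) (g t) \<in> A})"
    have "(\<Sum>k<N. emeasure \<mu> {t. (T^^k) (g t) \<in> T -` A}) = (\<Sum>k<N. F (Suc k))"
      by (intro sum.cong refl) (simp add: F_def)
    also have "\<dots> = (\<Sum>k<N. F k)"
    proof -
      have "F 0 + (\<Sum>k<N. F (Suc k)) = (\<Sum>k<Suc N. F k)" by (rule sum.lessThan_Suc_shift[symmetric])
      also have "\<dots> = (\<Sum>k<N. F k) + F N" by simp
      also have "F N = F 0" by (simp add: F_def per)
      finally have "F 0 + (\<Sum>k<N. F (Suc k)) = F 0 + (\<Sum>k<N. F k)" by (simp add: add.commute)
      then show ?thesis using fin by (simp add: F_def ennreal_add_left_cancel)
    qed
    finally show "emeasure \<nu> (T -` A) = emeasure \<nu> A"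
      using nu_eq[OF TA] nu_eq[OF A] by (simp add: F_def)
  qed
  have cont: "continuous_measure \<nu>"
    unfolding continuous_measure_def
  proof
    fix a
    have "emeasure \<mu> {t. (T^^k) (g t) \<in> {a}} = 0" if k: "k < N" for k
    proof -
      let ?S = "{t. (T^^k) (g t) \<in> {a}}"
      have Sm: "?S \<in> sets borel" using measurable_sets[OF hm[of k], of "{a}"] by (simp add: vimage_def)
      have sub: "{0..<1} \<inter> ?S \<subseteq> {t0}" if "t0 \<in> {0..<1} \<inter> ?S" for t0
      proof
        fix t assume t: "t \<in> {0..<1} \<inter> ?S"
        have "\<And>s. (T^^(N-k)) ((T^^k) (g s)) = g s"
          using per k by (metis funpow_add o_apply le_add_diff_inverse2 less_imp_le)
        then have "g t = g t0" using t that by (metis IntD2 mem_Collect_eq singletonD)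
        then show "t \<in> {t0}" using inj t that by (auto dest: inj_onD)
      qed
      have "emeasure lborel ({0..<1} \<inter> ?S) = 0"
      proof (cases "{0..<1} \<inter> ?S = {}")
        case True then show ?thesis by simp
      next
        case False
        then obtain t0 where "t0 \<in> {0..<1} \<inter> ?S" by blast
        then have "emeasure lborel ({0..<1} \<inter> ?S) \<le> emeasure lborel {t0}"
          using sub by (intro emeasure_mono) auto
        then show ?thesis by simp
      qed
      then show ?thesis unfolding \<mu>_def using Sm by simp
    qed
    then show "emeasure \<nu> {a} = 0" using nu_eq[of "{a}"] by simp
  qed
  show ?thesis using snu pnu inv cont unfolding borel_prob_def by blast
qed


lemma inv_measure_eq:
  assumes "invariant_measure T M" "A \<in> sets borel"
  shows "measure M (T -` A) = measure M A"
  using assms unfolding invariant_measure_def measure_def by simp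

lemma finite_atoms:
  fixes M :: "'a::metric_space measure"
  assumes P: "prob_space M" and S: "sets M = sets borel" and c: "c > 0"
  shows "finite {x. c \<le> measure M {x}}"
proof (rule ccontr)
  interpret prob_space M by (rule P)
  assume inf: "infinite {x. c \<le> measure M {x}}"
  obtain K :: nat where K: "1 < of_nat K * c" using ex_less_of_nat_mult[OF c] by blast
  obtain B where B: "B \<subseteq> {x. c \<le> measure M {x}}" "finite B" "card B = K"
    using infinite_arbitrarily_large[OF inf] by blast
  have "measure M B = (\<Sum>x\<in>B. measure M {x})"
    by (rule measure_eq_sum_singleton) (auto simp: S B)
  also have "\<dots> \<ge> (\<Sum>x\<in>B. c)" using B by (intro sum_mono) auto
  finally have "of_nat K * c \<le> measure M B" using B by simp
  moreover have "measure M B \<le> 1" by (rule prob_le_1)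
  ultimately show False using K by simp
qed

lemma atom_mono:
  fixes M :: "'a::metric_space measure"
  assumes P: "prob_space M" and S: "sets M = sets borel" and I: "invariant_measure T M"
    and Tm: "T \<in> borel_measurable borel"
  shows "measure M {x} \<le> measure M {T x}"
proof -
  interpret prob_space M by (rule P)
  have "{T x} \<in> sets borel" by simp
  then have "T -` {T x} \<in> sets M" using measurable_sets[OF Tm] S by fastforce
  then have "measure M {x} \<le> measure M (T -` {T x})" by (intro finite_measure_mono) auto
  also have "\<dots> = measure M {T x}" by (rule inv_measure_eq[OF I]) simp
  finally show ?thesis .
qed

lemma surj_atoms:
  fixes M :: "'a::metric_space measure"
  assumes P: "prob_space M" and S: "sets M = sets borel" and I: "invariant_measure T M"
    and Tm: "T \<in> borel_measurable borel"
    and fin: "finite A" and sub: "T ` A \<subseteq> A" and pos: "\<And>x. x \<in> A \<Longrightarrow> measure M {x} > 0"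
  shows "T ` A = A"
proof (rule ccontr)
  interpret prob_space M by (rule P)
  assume "T ` A \<noteq> A"
  then obtain x where x: "x \<in> A" "x \<notin> T ` A" using sub by blast
  have fA: "finite (T ` A)" using fin by simp
  have cl: "closed (T ` A)" using fA by (rule finite_imp_closed)
  then have TA: "T ` A \<in> sets borel" by simp
  then have pre: "T -` (T ` A) \<in> sets M" using measurable_sets[OF Tm] S by fastforce
  have AM: "A \<in> sets M" using fin S finite_imp_closed[OF fin] by simp
  have AxM: "A - {x} \<in> sets M" using AM S by (intro sets.Diff) auto
  have "measure M A \<le> measure M (T -` (T ` A))" using pre by (intro finite_measure_mono) auto
  also have "\<dots> = measure M (T ` A)" by (rule inv_measure_eq[OF I TA])
  also have "\<dots> \<le> measure M (A - {x})" using sub x AxM by (intro finite_measure_mono) auto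
  also have "\<dots> = measure M A - measure M {x}" using x AM S by (intro finite_measure_Diff) auto
  finally show False using pos[OF x(1)] by simp
qed

lemma atom_periodic:
  fixes M :: "'a::metric_space measure"
  assumes P: "prob_space M" and S: "sets M = sets borel" and I: "invariant_measure T M"
    and Tm: "T \<in> borel_measurable borel" and a: "measure M {a} > 0"
  shows "\<exists>n. (T ^^ Suc n) a = a"
proof -
  define A where "A = {x. measure M {a} \<le> measure M {x}}"
  have fin: "finite A" unfolding A_def by (rule finite_atoms[OF P S a])
  have sub: "T ` A \<subseteq> A" using atom_mono[OF P S I Tm] unfolding A_def by (auto intro: order_trans)
  have pos: "\<And>x. x \<in> A \<Longrightarrow> measure M {x} > 0" using a by (auto simp: A_def)
  have eq: "T ` A = A" by (rule surj_atoms[OF P S I Tm fin sub pos])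
  have inj: "inj_on T A" using eq fin by (simp add: eq_card_imp_inj_on)
  have orb: "(T ^^ n) a \<in> A" for n
    by (induction n) (use sub in \<open>auto simp: A_def\<close>)
  have "\<not> inj_on (\<lambda>n. (T ^^ n) a) {..card A}"
  proof
    assume "inj_on (\<lambda>n. (T ^^ n) a) {..card A}"
    then have "card {..card A} \<le> card A" using orb fin by (intro card_inj_on_le) auto
    then show False by simp
  qed
  then obtain i j where ij: "i < j" "(T ^^ i) a = (T ^^ j) a"
    unfolding inj_on_def by (metis linorder_neqE_nat)
  have "\<forall>j. i < j \<longrightarrow> (T ^^ i) a = (T ^^ j) a \<longrightarrow> (T ^^ (j - i)) a = a"
  proof (induction i)
    case 0 then show ?case by simp
  next
    case (Suc i)
    show ?case
    proof (intro allI impI)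
      fix j assume j: "Suc i < j" "(T ^^ Suc i) a = (T ^^ j) a"
      obtain j' where j': "j = Suc j'" using j by (cases j) auto
      have "T ((T ^^ i) a) = T ((T ^^ j') a)" using j j' by simp
      then have "(T ^^ i) a = (T ^^ j') a" using inj orb by (auto dest: inj_onD)
      then show "(T ^^ (j - Suc i)) a = a" using Suc j j' by simp
    qed
  qed
  then have "(T ^^ (j - i)) a = a" using ij by blast
  moreover have "j - i = Suc (j - i - 1)" using ij by simp
  ultimately show ?thesis by metis
qed


lemma case_b:
  fixes T :: "'a::polish_space \<Rightarrow> 'a" and F0 :: "'a set"
  assumes noiso: "no_isolated_point (UNIV :: 'a set)"
    and contT: "continuous_on UNIV T" and F0: "finite F0"
    and H: "\<And>n x. (T ^^ Suc n) x = x \<Longrightarrow> x \<in> F0"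
    and BM: "borel_prob M" and I: "invariant_measure T M" and FS: "full_support M"
  shows "\<exists>M. borel_prob M \<and> invariant_measure T M \<and> continuous_measure M"
proof -
  have P: "prob_space M" and S: "sets M = sets borel" using BM by (auto simp: borel_prob_def)
  interpret prob_space M by (rule P)
  have Tm: "T \<in> borel_measurable borel" by (rule borel_measurable_continuous_onI[OF contT])
  have atF0: "x \<in> F0" if "measure M {x} > 0" for x
    using atom_periodic[OF P S I Tm that] H by blast
  define Pa where "Pa = {x \<in> F0. measure M {x} > 0}"
  have finP: "finite Pa" using F0 by (simp add: Pa_def)
  have subP: "T ` Pa \<subseteq> Pa"
  proof
    fix y assume "y \<in> T ` Pa"
    then obtain x where x: "x \<in> Pa" "y = T x" by blast
    then have "measure M {T x} > 0" using atom_mono[OF P S I Tm, of x] by (auto simp: Pa_def)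
    then show "y \<in> Pa" using atF0 x by (auto simp: Pa_def)
  qed
  have posP: "\<And>x. x \<in> Pa \<Longrightarrow> measure M {x} > 0" by (simp add: Pa_def)
  have eqP: "T ` Pa = Pa" by (rule surj_atoms[OF P S I Tm finP subP posP])
  have injP: "inj_on T Pa" using eqP finP by (simp add: eq_card_imp_inj_on)
  have mass: "measure M {T x} = measure M {x}" if x: "x \<in> Pa" for x
  proof (rule ccontr)
    assume ne: "measure M {T x} \<noteq> measure M {x}"
    have le: "\<forall>y\<in>Pa. measure M {y} \<le> measure M {T y}" using atom_mono[OF P S I Tm] by blast
    have "(\<Sum>y\<in>Pa. measure M {y}) < (\<Sum>y\<in>Pa. measure M {T y})"
    proof (rule sum_strict_mono_ex1[OF finP])
      show "\<forall>y\<in>Pa. measure M {y} \<le> measure M {T y}" by (rule le)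
      have "measure M {x} < measure M {T x}" using le x ne by (simp add: order_less_le)
      then show "\<exists>y\<in>Pa. measure M {y} < measure M {T y}" using x by blast
    qed
    also have "\<dots> = (\<Sum>y\<in>T ` Pa. measure M {y})" by (simp add: sum.reindex[OF injP])
    finally show False using eqP by simp
  qed
  define Y where "Y = - Pa"
  have Yopen: "open Y" unfolding Y_def using finite_imp_closed[OF finP] by (simp add: open_Compl)
  have Yne: "Y \<noteq> {}"
  proof
    assume "Y = {}"
    then have "Pa = UNIV" unfolding Y_def by auto
    then have finU: "finite (UNIV :: 'a set)" using finP by simp
    obtain x :: 'a where True by blast
    have "open {x}"
    proof -
      have "{x} = - (UNIV - {x})" by auto
      moreover have "closed (UNIV - {x})" using finU by (intro finite_imp_closed) auto
      ultimately show ?thesis by (metis open_Compl)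
    qed
    then have "x isolated_in UNIV" unfolding isolated_in_def by blast
    then show False using noiso by (simp add: no_isolated_point_def)
  qed
  have YM: "Y \<in> sets M" using Yopen S by simp
  have "0 < emeasure M Y" using FS Yopen Yne unfolding full_support_def by blast
  then have EY: "emeasure M Y \<noteq> 0" by simp
  have EYf: "emeasure M Y \<noteq> \<infinity>" by simp
  define M' where "M' = uniform_measure M Y"
  have BM': "borel_prob M'" unfolding borel_prob_def M'_def
    using S prob_space_uniform_measure[OF EY EYf] by simp
  have key: "measure M (B - Pa) = measure M B - (\<Sum>x\<in>B \<inter> Pa. measure M {x})" if B: "B \<in> sets M" for B
  proof -
    have PaM: "Pa \<in> sets M" using finite_imp_closed[OF finP] S by simp
    have "measure M (B - Pa) = measure M B - measure M (B \<inter> Pa)"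
      by (rule finite_measure_Diff'[OF B PaM])
    also have "measure M (B \<inter> Pa) = (\<Sum>x\<in>B \<inter> Pa. measure M {x})"
      using finP S by (intro measure_eq_sum_singleton) auto
    finally show ?thesis .
  qed
  have inv: "invariant_measure T M'"
    unfolding invariant_measure_def
  proof
    fix A :: "'a set" assume A: "A \<in> sets borel"
    have TA: "T -` A \<in> sets M" using measurable_sets[OF Tm A] S by simp
    have AM: "A \<in> sets M" using A S by simp
    have sumeq: "(\<Sum>x\<in>T -` A \<inter> Pa. measure M {x}) = (\<Sum>x\<in>A \<inter> Pa. measure M {x})"
    proof -
      have img: "T ` (T -` A \<inter> Pa) = A \<inter> Pa"
      proof
        show "T ` (T -` A \<inter> Pa) \<subseteq> A \<inter> Pa" using subP by auto
        show "A \<inter> Pa \<subseteq> T ` (T -` A \<inter> Pa)"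
        proof
          fix y assume y: "y \<in> A \<inter> Pa"
          then have "y \<in> T ` Pa" using eqP by simp
          then obtain x where "x \<in> Pa" "y = T x" by (elim imageE)
          then show "y \<in> T ` (T -` A \<inter> Pa)" using y by auto
        qed
      qed
      have inj2: "inj_on T (T -` A \<inter> Pa)" using inj_on_subset[OF injP Int_lower2] .
      have "(\<Sum>x\<in>A \<inter> Pa. measure M {x}) = (\<Sum>x\<in>T -` A \<inter> Pa. measure M {T x})"
        by (simp add: img[symmetric] sum.reindex[OF inj2])
      also have "\<dots> = (\<Sum>x\<in>T -` A \<inter> Pa. measure M {x})" using mass by (intro sum.cong) auto
      finally show ?thesis by simp
    qed
    have "measure M (T -` A - Pa) = measure M (A - Pa)"
    proof -
      have "measure M (T -` A - Pa) = measure M (T -` A) - (\<Sum>x\<in>T -` A \<inter> Pa. measure M {x})" by (rule key[OF TA])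
      also have "\<dots> = measure M A - (\<Sum>x\<in>A \<inter> Pa. measure M {x})" by (simp only: sumeq inv_measure_eq[OF I A])
      also have "\<dots> = measure M (A - Pa)" by (rule key[OF AM, symmetric])
      finally show ?thesis .
    qed
    moreover have "Y \<inter> T -` A = T -` A - Pa" "Y \<inter> A = A - Pa" by (auto simp: Y_def)
    ultimately have "emeasure M (Y \<inter> T -` A) = emeasure M (Y \<inter> A)" by (simp add: emeasure_eq_measure)
    then show "emeasure M' (T -` A) = emeasure M' A"
      unfolding M'_def using YM TA AM by simp
  qed
  have cont: "continuous_measure M'"
    unfolding continuous_measure_def
  proof
    fix a :: 'a
    have aM: "{a} \<in> sets M" using S by simp
    have "emeasure M (Y \<inter> {a}) = 0"
    proof (cases "a \<in> Pa")
      case True then show ?thesis by (simp add: Y_def)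
    next
      case False
      then have "\<not> measure M {a} > 0" using atF0 by (auto simp: Pa_def)
      then have "measure M {a} = 0" using measure_nonneg[of M "{a}"] by linarith
      moreover have "Y \<inter> {a} = {a}" using False by (auto simp: Y_def)
      ultimately show ?thesis by (simp add: emeasure_eq_measure)
    qed
    then show "emeasure M' {a} = 0" unfolding M'_def using YM aM by simp
  qed
  show ?thesis using BM' inv cont by blast
qed


theorem proposition2:
  fixes T :: "'a::polish_space \<Rightarrow> 'a" and F0 :: "'a set"
  assumes "no_isolated_point (UNIV :: 'a set)"
    and "continuous_on UNIV T"
    and "finite F0"
    and "\<forall>N::nat. no_isolated_point {x. x \<notin> F0 \<and> (T ^^ N) x = x}"
    and "\<exists>M. borel_prob M \<and> invariant_measure T M \<and> full_support M"
  shows "\<exists>M. borel_prob M \<and> invariant_measure T M \<and> continuous_measure M"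
proof (cases "\<exists>n x. (T ^^ Suc n) x = x \<and> x \<notin> F0")
  case True
  then obtain n x0 where x0: "(T ^^ Suc n) x0 = x0" "x0 \<notin> F0" by blast
  define P where "P = {x. x \<notin> F0 \<and> (T ^^ Suc n) x = x}"
  have x0P: "x0 \<in> P" using x0 by (simp add: P_def)
  have noiso: "\<forall>x. \<not> x isolated_in P" using assms(4) unfolding P_def no_isolated_point_def by blast
  obtain g :: "real \<Rightarrow> 'a" where g: "g \<in> borel_measurable borel" "\<forall>t. g t \<in> closure P" "inj_on g {0..<1}"
    using cantor_map[OF x0P noiso] by blast
  have cl: "closed {x. (T ^^ Suc n) x = x}"
    by (rule closed_Collect_eq[OF continuous_funpow[OF assms(2)] continuous_on_id])
  have "closure P \<subseteq> {x. (T ^^ Suc n) x = x}"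
    by (rule closure_minimal[OF _ cl]) (auto simp: P_def)
  then have per: "\<And>t. (T ^^ Suc n) (g t) = g t" using g(2) by blast
  show ?thesis by (rule case_a[OF assms(2) _ g(1) per g(3)]) simp
next
  case False
  then have H: "\<And>n x. (T ^^ Suc n) x = x \<Longrightarrow> x \<in> F0" by blast
  from assms(5) obtain M where M: "borel_prob M" "invariant_measure T M" "full_support M" by blast
  show ?thesis by (rule case_b[of T F0 M, OF assms(1) assms(2) assms(3) H M(1) M(2) M(3)])
qed

end
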